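(* Let $G$ be the enhanced conflict graph of any traffic pattern in a multicast switch and let $k>1$. If $G$ has a set $S$ of $k$ pairwise non-adjacent vertices which all have a common neighbor $v$, then at least $k-1$ vertices of $S$ represent subflows from the same input as $v$.
   Context: A flow is $(i,J)$ with input $i$ and nonempty fanout set $J$ of outputs; a traffic pattern is a finite set of flows; subflows are $(i,J,j)$ with $j\in J$. Enhanced conflict graph: one vertex per subflow; distinct subflows $(i,J,j),(i',J',j')$ adjacent iff $j=j'$, or $i=i'$ and $J\ne J'$. *)

theory Defs
  imports Main
begin

definition traffic_pattern :: "('i \<times> 'o set) set \<Rightarrow> bool" where
  "traffic_pattern T \<longleftrightarrow> finite T \<and> (\<forall>(i, J) \<in> T. J \<noteq> {})"

definition subflows :: "('i \<times> 'o set) set \<Rightarrow> ('i \<times> 'o set \<times> 'o) set" where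
  "subflows T = {(i, J, j). (i, J) \<in> T \<and> j \<in> J}"

text \<open>Adjacency in the enhanced conflict graph (vertex set: subflows T).\<close>

definition ecg_adj :: "('i \<times> 'o set \<times> 'o) \<Rightarrow> ('i \<times> 'o set \<times> 'o) \<Rightarrow> bool" where
  "ecg_adj u w \<longleftrightarrow> u \<noteq> w \<and>
     (case u of (i, J, j) \<Rightarrow> case w of (i', J', j') \<Rightarrow>
        j = j' \<or> (i = i' \<and> J \<noteq> J'))"

end

theory Submission
  imports Defs
begin

theorem lemma3:
  fixes T :: "('i \<times> 'o set) set"
    and S :: "('i \<times> 'o set \<times> 'o) set"
    and v :: "'i \<times> 'o set \<times> 'o"
    and k :: nat
  assumes "traffic_pattern T"
    and "k > 1"
    and "S \<subseteq> subflows T" and "finite S" and "card S = k"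
    and "\<forall>u\<in>S. \<forall>w\<in>S. \<not> ecg_adj u w"
    and "v \<in> subflows T"
    and "\<forall>u\<in>S. ecg_adj v u"
  shows "card {u \<in> S. fst u = fst v} \<ge> k - 1"
proof -
  let ?A = "{u \<in> S. fst u = fst v}"
  let ?B = "{u \<in> S. fst u \<noteq> fst v}"
  have out: "snd (snd u) = snd (snd v)" if "u \<in> ?B" for u
  proof -
    have a: "ecg_adj v u" "fst u \<noteq> fst v" using that assms(8) by auto
    obtain a1 a2 a3 where u: "u = (a1,a2,a3)" by (cases u) blast
    obtain b1 b2 b3 where vv: "v = (b1,b2,b3)" by (cases v) blast
    show ?thesis using a unfolding u vv ecg_adj_def by auto
  qed
  have eq: "u = w" if "u \<in> ?B" "w \<in> ?B" for u w
  proof (rule ccontr)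
    assume "u \<noteq> w"
    moreover have "snd (snd u) = snd (snd w)" using out[OF that(1)] out[OF that(2)] by simp
    moreover obtain a1 a2 a3 where u: "u = (a1,a2,a3)" by (cases u) blast
    moreover obtain b1 b2 b3 where w: "w = (b1,b2,b3)" by (cases w) blast
    ultimately have "ecg_adj u w" unfolding ecg_adj_def by auto
    thus False using assms(6) that(1,2) by blast
  qed
  have cB: "card ?B \<le> 1" using eq by (simp add: card_le_Suc0_iff_eq assms(4))
  have "card S = card ?A + card ?B"
  proof -
    have "S = ?A \<union> ?B" by blast
    hence "card S = card (?A \<union> ?B)" by simp
    also have "\<dots> = card ?A + card ?B" using assms(4) by (intro card_Un_disjoint) auto
    finally show ?thesis .
  qed
  thus ?thesis using cB assms(5) by linarith
qed

end
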